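(* Let $n,k$ be integers with $1 \leq k \leq n$ and let $q$ be a prime power with $q > \binom{n-1}{k-1}$. Then there exists an $[n,k]_q$ MDS code that has a $k \times n$ generator matrix $\mathbf{G}$ over $\mathbb{F}_q$ satisfying both of the following: (C1) (sparsest) each row of $\mathbf{G}$ has Hamming weight $n-k+1$; (C2) (balanced) the Hamming weights of the columns of $\mathbf{G}$ differ from each other by at most one.
   Context: $\mathbb{F}_q$ is the finite field with $q$ elements. The Hamming weight of a vector is the number of its nonzero coordinates; rows and columns of a matrix are regarded as vectors. An $[n,k]_q$ MDS code is a linear code of length $n$ and dimension $k$ over $\mathbb{F}_q$ with minimum distance $n-k+1$. *)

theory Defs
  imports Main
begin

text \<open>Vectors of length n over a field are functions nat => 'a, only the
coordinates 0..<n matter.  A k x n matrix is a function nat => nat => 'a,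
entries G i j with i < k, j < n.\<close>

definition hamming_weight :: "nat \<Rightarrow> (nat \<Rightarrow> 'a::zero) \<Rightarrow> nat" where
  "hamming_weight n v = card {j. j < n \<and> v j \<noteq> 0}"

definition hamming_dist :: "nat \<Rightarrow> (nat \<Rightarrow> 'a) \<Rightarrow> (nat \<Rightarrow> 'a) \<Rightarrow> nat" where
  "hamming_dist n u v = card {j. j < n \<and> u j \<noteq> v j}"

definition row_space :: "nat \<Rightarrow> nat \<Rightarrow> (nat \<Rightarrow> nat \<Rightarrow> 'a::comm_ring_1) \<Rightarrow> (nat \<Rightarrow> 'a) set" where
  "row_space k n G = {(\<lambda>j. if j < n then (\<Sum>i<k. m i * G i j) else 0) | m. True}"

definition rows_independent :: "nat \<Rightarrow> nat \<Rightarrow> (nat \<Rightarrow> nat \<Rightarrow> 'a::comm_ring_1) \<Rightarrow> bool" where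
  "rows_independent k n G \<longleftrightarrow>
     (\<forall>m. (\<forall>j<n. (\<Sum>i<k. m i * G i j) = 0) \<longrightarrow> (\<forall>i<k. m i = 0))"

definition min_distance :: "nat \<Rightarrow> (nat \<Rightarrow> 'a) set \<Rightarrow> nat" where
  "min_distance n C = Min {hamming_dist n u v | u v. u \<in> C \<and> v \<in> C \<and> u \<noteq> v}"

definition generates_MDS :: "nat \<Rightarrow> nat \<Rightarrow> (nat \<Rightarrow> nat \<Rightarrow> 'a::field) \<Rightarrow> bool" where
  "generates_MDS k n G \<longleftrightarrow>
     rows_independent k n G \<and> min_distance n (row_space k n G) = n - k + 1"

definition row_weight :: "nat \<Rightarrow> (nat \<Rightarrow> nat \<Rightarrow> 'a::zero) \<Rightarrow> nat \<Rightarrow> nat" where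
  "row_weight n G i = hamming_weight n (\<lambda>j. G i j)"

definition col_weight :: "nat \<Rightarrow> (nat \<Rightarrow> nat \<Rightarrow> 'a::zero) \<Rightarrow> nat \<Rightarrow> nat" where
  "col_weight k G j = hamming_weight k (\<lambda>i. G i j)"

end

theory Submission
  imports Defs "Jordan_Normal_Form.Determinant"
begin


lemma avoid_aux:
  fixes I :: "nat set" and F :: "(nat \<Rightarrow> 'a::{finite,field}) set"
  assumes "finite F" "card F < card (UNIV :: 'a set)" "\<forall>c\<in>F. \<exists>i\<in>I. i < p \<and> c i \<noteq> 0"
  shows "\<exists>g. (\<forall>i. i \<notin> I \<or> p \<le> i \<longrightarrow> g i = 0) \<and> (\<forall>c\<in>F. (\<Sum>i<p. c i * g i) \<noteq> 0)"
  using assms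
proof (induction p arbitrary: F)
  case 0
  then have "F = {}" by auto
  then show ?case by (intro exI[of _ "\<lambda>_. 0"]) auto
next
  case (Suc p F)
  show ?case
  proof (cases "p \<in> I")
    case False
    have "\<forall>c\<in>F. \<exists>i\<in>I. i < p \<and> c i \<noteq> 0"
    proof
      fix c assume "c \<in> F"
      then obtain i where i: "i \<in> I" "i < Suc p" "c i \<noteq> 0" using Suc.prems(3) by blast
      then have "i \<noteq> p" using False by blast
      then show "\<exists>i\<in>I. i < p \<and> c i \<noteq> 0" using i by (intro bexI[of _ i]) auto
    qed
    from Suc.IH[OF Suc.prems(1,2) this] obtain g where
      g: "\<forall>i. i \<notin> I \<or> p \<le> i \<longrightarrow> g i = 0" "\<forall>c\<in>F. (\<Sum>i<p. c i * g i) \<noteq> 0" by blast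
    have "g p = 0" using g(1) False by blast
    then have "\<forall>c\<in>F. (\<Sum>i<Suc p. c i * g i) \<noteq> 0" using g(2) by simp
    moreover have "\<forall>i. i \<notin> I \<or> Suc p \<le> i \<longrightarrow> g i = 0" using g(1) Suc_leD
      by blast
    ultimately show ?thesis by blast
  next
    case True
    define A where "A = {c\<in>F. \<exists>i\<in>I. i < p \<and> c i \<noteq> 0}"
    have AF: "A \<subseteq> F" unfolding A_def by auto
    have "finite A" using finite_subset[OF AF Suc.prems(1)] .
    moreover have "card A < card (UNIV :: 'a set)"
      using card_mono[OF Suc.prems(1) AF] Suc.prems(2) by linarith
    moreover have "\<forall>c\<in>A. \<exists>i\<in>I. i < p \<and> c i \<noteq> 0" unfolding A_def by blast
    ultimately have "\<exists>g. (\<forall>i. i \<notin> I \<or> p \<le> i \<longrightarrow> g i = 0) \<and> (\<forall>c\<in>A. (\<Sum>i<p. c i * g i) \<noteq> 0)"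
      by (rule Suc.IH)
    then obtain g where
      g: "\<forall>i. i \<notin> I \<or> p \<le> i \<longrightarrow> g i = 0" "\<forall>c\<in>A. (\<Sum>i<p. c i * g i) \<noteq> 0"
      by blast
    define B where "B = (\<lambda>c. {x::'a. (\<Sum>i<p. c i * g i) + c p * x = 0})"
    have B1: "card (B c) \<le> 1" if "c \<in> F" for c
    proof -
      have nz: "(\<Sum>i<p. c i * g i) \<noteq> 0 \<or> c p \<noteq> 0"
      proof (cases "c \<in> A")
        case True then show ?thesis using g(2) by blast
      next
        case False
        have "\<exists>i\<in>I. i < Suc p \<and> c i \<noteq> 0" using bspec[OF Suc.prems(3) that] .
        then obtain i where i: "i \<in> I" "i < Suc p" "c i \<noteq> 0" by blast
        have "\<not> i < p" using False that i unfolding A_def by blast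
        then have "i = p" using i(2) by simp
        then show ?thesis using \<open>c i \<noteq> 0\<close> by simp
      qed
      have "\<forall>x\<in>B c. \<forall>y\<in>B c. x = y"
      proof (intro ballI)
        fix x y assume "x \<in> B c" "y \<in> B c"
        then have e: "(\<Sum>i<p. c i * g i) + c p * x = 0" "(\<Sum>i<p. c i * g i) + c p * y = 0"
          unfolding B_def by auto
        have "c p * (x - y) = ((\<Sum>i<p. c i * g i) + c p * x) - ((\<Sum>i<p. c i * g i) + c p * y)"
          by (simp add: algebra_simps)
        also have "\<dots> = 0" using e by simp
        finally have "c p * (x - y) = 0" .
        show "x = y"
        proof (cases "c p = 0")
          case True
          then have "(\<Sum>i<p. c i * g i) = 0" using e(1) by simp
          then show ?thesis using nz True by blast
        next
          case False
          then have "x - y = 0" using \<open>c p * (x - y) = 0\<close> by simp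
          then show ?thesis by simp
        qed
      qed
      then show ?thesis using card_le_Suc0_iff_eq[of "B c"] by simp
    qed
    have "card (\<Union>c\<in>F. B c) \<le> (\<Sum>c\<in>F. card (B c))"
      using card_UN_le[OF Suc.prems(1)] by blast
    also have "\<dots> \<le> (\<Sum>c\<in>F. 1)" by (rule sum_mono) (use B1 in auto)
    also have "\<dots> < card (UNIV :: 'a set)" using Suc.prems(2) by simp
    finally have cu: "card (\<Union>c\<in>F. B c) < card (UNIV :: 'a set)" .
    have "(\<Union>c\<in>F. B c) \<noteq> UNIV"
    proof
      assume "(\<Union>c\<in>F. B c) = UNIV"
      then show False using cu by simp
    qed
    then obtain x where x: "\<forall>c\<in>F. x \<notin> B c" by blast
    define g' where "g' = g(p := x)"
    have eqs: "(\<Sum>i<Suc p. c i * g' i) = (\<Sum>i<p. c i * g i) + c p * x" for c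
    proof -
      have "(\<Sum>i<p. c i * g' i) = (\<Sum>i<p. c i * g i)"
        by (rule sum.cong) (auto simp: g'_def)
      then show ?thesis by (simp add: g'_def)
    qed
    have "\<forall>c\<in>F. (\<Sum>i<Suc p. c i * g' i) \<noteq> 0"
    proof
      fix c assume "c \<in> F"
      then have "x \<notin> B c" using x by blast
      then show "(\<Sum>i<Suc p. c i * g' i) \<noteq> 0" unfolding eqs B_def by blast
    qed
    moreover have "\<forall>i. i \<notin> I \<or> Suc p \<le> i \<longrightarrow> g' i = 0"
    proof (intro allI impI)
      fix i assume "i \<notin> I \<or> Suc p \<le> i"
      then have "i \<noteq> p" "i \<notin> I \<or> p \<le> i" using True by auto
      then show "g' i = 0" using g(1) unfolding g'_def by simp
    qed
    ultimately show ?thesis by blast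
  qed
qed

lemma avoid:
  fixes F :: "((nat \<Rightarrow> 'a::{finite,field}) \<Rightarrow> 'a) set"
  assumes "finite F" "card F < card (UNIV :: 'a set)"
    and "\<forall>f\<in>F. \<exists>c. (\<forall>g. f g = (\<Sum>i<k. c i * g i)) \<and> (\<exists>i\<in>I. i < k \<and> c i \<noteq> 0)"
  shows "\<exists>g. (\<forall>i. i \<notin> I \<longrightarrow> g i = 0) \<and> (\<forall>f\<in>F. f g \<noteq> 0)"
proof -
  obtain C where C0: "\<forall>f\<in>F. (\<forall>g. f g = (\<Sum>i<k. C f i * g i)) \<and> (\<exists>i\<in>I. i < k \<and> C f i \<noteq> 0)"
    using bchoice[OF assms(3)] by blast
  have C: "(\<forall>g. f g = (\<Sum>i<k. C f i * g i)) \<and> (\<exists>i\<in>I. i < k \<and> C f i \<noteq> 0)" if "f \<in> F" for f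
    using bspec[OF C0 that] .
  have fin: "finite (C ` F)" using assms(1) by simp
  have cardC: "card (C ` F) < card (UNIV :: 'a set)"
    using card_image_le[OF assms(1), of C] assms(2) by linarith
  have h3: "\<forall>c\<in>C ` F. \<exists>i\<in>I. i < k \<and> c i \<noteq> 0"
  proof
    fix c assume "c \<in> C ` F"
    then obtain f where f: "f \<in> F" "c = C f" by blast
    show "\<exists>i\<in>I. i < k \<and> c i \<noteq> 0" using conjunct2[OF C[OF f(1)]] f(2) by simp
  qed
  have "\<exists>g. (\<forall>i. i \<notin> I \<or> k \<le> i \<longrightarrow> g i = 0) \<and> (\<forall>c\<in>C ` F. (\<Sum>i<k. c i * g i) \<noteq> 0)"
    by (rule avoid_aux[OF fin cardC h3])
  then obtain g where
    g: "\<forall>i. i \<notin> I \<or> k \<le> i \<longrightarrow> g i = 0" "\<forall>c\<in>C ` F. (\<Sum>i<k. c i * g i) \<noteq> 0"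
    by blast
  have "\<forall>f\<in>F. f g \<noteq> 0"
  proof
    fix f assume f: "f \<in> F"
    have "(\<Sum>i<k. C f i * g i) \<noteq> 0" using g(2) f by blast
    moreover have "f g = (\<Sum>i<k. C f i * g i)" using conjunct1[OF C[OF f]] by blast
    ultimately show "f g \<noteq> 0" by simp
  qed
  then show ?thesis using g(1) by blast
qed


definition subm :: "(nat \<Rightarrow> nat \<Rightarrow> 'a) \<Rightarrow> (nat \<Rightarrow> nat) \<Rightarrow> (nat \<Rightarrow> nat) \<Rightarrow> nat \<Rightarrow> 'a mat" where
  "subm G r c p = mat p p (\<lambda>(a,b). G (r a) (c b))"

lemma subm_carrier: "subm G r c p \<in> carrier_mat p p"
  unfolding subm_def by simp

lemma subm_index: "a < p \<Longrightarrow> b < p \<Longrightarrow> subm G r c p $$ (a,b) = G (r a) (c b)"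
  unfolding subm_def by simp

lemma subm_laplace:
  fixes G :: "nat \<Rightarrow> nat \<Rightarrow> 'a::comm_ring_1"
  shows "det (subm G r c (Suc p)) = (\<Sum>a<Suc p. G (r a) (c p) * cofactor (subm G r c (Suc p)) a p)"
proof -
  have "det (subm G r c (Suc p)) = (\<Sum>a<Suc p. subm G r c (Suc p) $$ (a,p) * cofactor (subm G r c (Suc p)) a p)"
    by (rule laplace_expansion_column[OF subm_carrier]) simp
  also have "\<dots> = (\<Sum>a<Suc p. G (r a) (c p) * cofactor (subm G r c (Suc p)) a p)"
    by (rule sum.cong) (simp_all add: subm_index)
  finally show ?thesis .
qed

lemma subm_cofactor_cong:
  fixes G H :: "nat \<Rightarrow> nat \<Rightarrow> 'a::comm_ring_1"
  assumes "\<And>a b. a < Suc p \<Longrightarrow> b < p \<Longrightarrow> G (r a) (c b) = H (r a) (c b)"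
  shows "cofactor (subm G r c (Suc p)) a p = cofactor (subm H r c (Suc p)) a p"
proof -
  have "mat_delete (subm G r c (Suc p)) a p = mat_delete (subm H r c (Suc p)) a p"
  proof (rule eq_matI)
    fix i j assume ij: "i < dim_row (mat_delete (subm H r c (Suc p)) a p)"
      "j < dim_col (mat_delete (subm H r c (Suc p)) a p)"
    then have i: "i < p" and j: "j < p" by (simp_all add: subm_def)
    define i' where "i' = (if i < a then i else Suc i)"
    have i': "i' < Suc p" using i unfolding i'_def by simp
    have "mat_delete (subm G r c (Suc p)) a p $$ (i,j) = subm G r c (Suc p) $$ (i', j)"
      unfolding mat_delete_def i'_def using i j by (simp add: subm_def)
    also have "\<dots> = G (r i') (c j)" using i' j by (simp add: subm_index)
    also have "\<dots> = H (r i') (c j)" using assms i' j by blast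
    also have "\<dots> = subm H r c (Suc p) $$ (i', j)" using i' j by (simp add: subm_index)
    also have "\<dots> = mat_delete (subm H r c (Suc p)) a p $$ (i,j)"
      unfolding mat_delete_def i'_def using i j by (simp add: subm_def)
    finally show "mat_delete (subm G r c (Suc p)) a p $$ (i,j) = mat_delete (subm H r c (Suc p)) a p $$ (i,j)" .
  qed (simp_all add: subm_def)
  then show ?thesis unfolding cofactor_def by simp
qed

lemma subm_cofactor_last:
  fixes G :: "nat \<Rightarrow> nat \<Rightarrow> 'a::comm_ring_1"
  shows "cofactor (subm G r c (Suc p)) p p = det (subm G r c p)"
proof -
  have "mat_delete (subm G r c (Suc p)) p p = subm G r c p"
  proof (rule eq_matI)
    fix i j assume ij: "i < dim_row (subm G r c p)" "j < dim_col (subm G r c p)"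
    then have i: "i < p" and j: "j < p" by (simp_all add: subm_def)
    show "mat_delete (subm G r c (Suc p)) p p $$ (i,j) = subm G r c p $$ (i,j)"
      unfolding mat_delete_def using i j by (simp add: subm_def)
  qed (simp_all add: subm_def)
  moreover have "(-1::'a)^(p+p) = 1" by (simp add: mult_2[symmetric])
  ultimately show ?thesis unfolding cofactor_def by simp
qed

lemma subm_kernel:
  fixes G :: "nat \<Rightarrow> nat \<Rightarrow> 'a::field"
  assumes d: "det (subm G r c k) \<noteq> 0" and r: "bij_betw r {..<k} {..<k}"
    and m: "\<And>b. b < k \<Longrightarrow> (\<Sum>i<k. m i * G i (c b)) = 0"
    and i: "i < k"
  shows "m i = 0"
proof -
  define A where "A = subm G r c k"
  have A: "A \<in> carrier_mat k k" unfolding A_def by (rule subm_carrier)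
  then have At: "transpose_mat A \<in> carrier_mat k k" by simp
  have dt: "det (transpose_mat A) \<noteq> 0" using d det_transpose[OF A] unfolding A_def by simp
  define v where "v = vec k (\<lambda>a. m (r a))"
  have v: "v \<in> carrier_vec k" unfolding v_def by simp
  have "transpose_mat A *\<^sub>v v = 0\<^sub>v k"
  proof (rule eq_vecI)
    fix b assume "b < dim_vec (0\<^sub>v k :: 'a vec)"
    then have b: "b < k" by simp
    have "(transpose_mat A *\<^sub>v v) $ b = row (transpose_mat A) b \<bullet> v"
      using b A by simp
    also have "\<dots> = (\<Sum>a\<in>{0..<k}. row (transpose_mat A) b $ a * v $ a)"
      unfolding scalar_prod_def v_def by simp
    also have "\<dots> = (\<Sum>a<k. G (r a) (c b) * m (r a))"
    proof (rule sum.cong)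
      fix a assume "a \<in> {..<k}"
      then have a: "a < k" by simp
      show "row (transpose_mat A) b $ a * v $ a = G (r a) (c b) * m (r a)"
        using a b A unfolding v_def A_def by (simp add: subm_index)
    qed (simp add: lessThan_atLeast0)
    also have "\<dots> = (\<Sum>i<k. G i (c b) * m i)"
      by (rule sum.reindex_bij_betw[OF r, where g = "\<lambda>i. G i (c b) * m i"])
    also have "\<dots> = 0" using m[OF b] by (simp add: mult.commute)
    finally show "(transpose_mat A *\<^sub>v v) $ b = 0\<^sub>v k $ b" using b by simp
  qed (use A in simp)
  then have "v = 0\<^sub>v k" using det_0_iff_vec_prod_zero_field[OF At] dt v by blast
  moreover obtain a where a: "a < k" "r a = i" using r i unfolding bij_betw_def by (metis imageE lessThan_iff)
  ultimately have "v $ a = 0" by simp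
  then show ?thesis unfolding v_def using a by simp
qed


lemma downclosed_eq:
  fixes S :: "nat set"
  assumes "finite S" "\<And>x y. x \<in> S \<Longrightarrow> y < x \<Longrightarrow> y \<in> S"
  shows "S = {..<card S}"
proof (cases "S = {}")
  case True then show ?thesis by simp
next
  case False
  define m where "m = Suc (Max S)"
  have "S = {..<m}"
  proof
    show "S \<subseteq> {..<m}" using Max_ge[OF assms(1)] unfolding m_def by (auto simp: less_Suc_eq_le)
    show "{..<m} \<subseteq> S"
    proof
      fix y assume "y \<in> {..<m}"
      then have "y \<le> Max S" unfolding m_def by simp
      moreover have "Max S \<in> S" using Max_in[OF assms(1) False] .
      ultimately show "y \<in> S" using assms(2) by (cases "y = Max S") (auto simp: le_less)
    qed
  qed
  then show ?thesis by simp
qed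

definition pp :: "(nat \<Rightarrow> nat) \<Rightarrow> nat \<Rightarrow> nat \<Rightarrow> nat" where
  "pp e k t = card {b. b < k \<and> e b < t}"

lemma pp_iff:
  assumes "strict_mono_on {..<k} e"
  shows "b < pp e k t \<longleftrightarrow> (b < k \<and> e b < t)"
proof -
  define S where "S = {b. b < k \<and> e b < t}"
  have fin: "finite S" unfolding S_def by simp
  have dc: "y \<in> S" if "x \<in> S" "y < x" for x y
  proof -
    have "x < k" "e x < t" using that(1) unfolding S_def by auto
    moreover have "e y < e x" using strict_mono_onD[OF assms, of y x] that(2) \<open>x < k\<close> by simp
    ultimately show ?thesis using that(2) unfolding S_def by simp
  qed
  have "S = {..<card S}" by (rule downclosed_eq[OF fin dc])
  then have "b \<in> S \<longleftrightarrow> b < card S" by blast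
  then show ?thesis unfolding pp_def S_def by simp
qed

lemma nat_eq_by_less:
  assumes "\<And>b::nat. b < x \<longleftrightarrow> b < y" shows "x = y"
proof (rule ccontr)
  assume "x \<noteq> y"
  then have "x < y \<or> y < x" by arith
  then show False
  proof
    assume "x < y" then have "x < x" using assms[of x] by simp
    then show False by simp
  next
    assume "y < x" then have "y < y" using assms[of y] by simp
    then show False by simp
  qed
qed

lemma pp_in:
  assumes sm: "strict_mono_on {..<k} e" and t: "t \<in> e ` {..<k}"
  shows "pp e k t < k" "e (pp e k t) = t" "pp e k (Suc t) = Suc (pp e k t)"
proof -
  obtain b0 where b0: "b0 < k" "e b0 = t" using t by blast
  have lt: "e b < e b0 \<longleftrightarrow> b < b0" if "b < k" for b
    using strict_mono_on_less[OF sm] that b0(1) by simp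
  have le: "e b \<le> e b0 \<longleftrightarrow> b \<le> b0" if "b < k" for b
    using strict_mono_on_less_eq[OF sm] that b0(1) by simp
  have "pp e k t = b0"
  proof (rule nat_eq_by_less)
    fix b show "b < pp e k t \<longleftrightarrow> b < b0"
      using pp_iff[OF sm, of b t] lt[of b] b0 by (cases "b < k") auto
  qed
  moreover have "pp e k (Suc t) = Suc b0"
  proof (rule nat_eq_by_less)
    fix b show "b < pp e k (Suc t) \<longleftrightarrow> b < Suc b0"
      using pp_iff[OF sm, of b "Suc t"] le[of b] b0 by (cases "b < k") (auto simp: less_Suc_eq_le)
  qed
  ultimately show "pp e k t < k" "e (pp e k t) = t" "pp e k (Suc t) = Suc (pp e k t)"
    using b0 by simp_all
qed

lemma pp_notin:
  assumes sm: "strict_mono_on {..<k} e" and t: "t \<notin> e ` {..<k}"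
  shows "pp e k (Suc t) = pp e k t"
proof -
  have "{b. b < k \<and> e b < Suc t} = {b. b < k \<and> e b < t}"
    using t by (auto simp: less_Suc_eq)
  then show ?thesis unfolding pp_def by simp
qed

lemma pp_0: "pp e k 0 = 0" unfolding pp_def by simp

lemma pp_n: assumes "e ` {..<k} \<subseteq> {..<n}" shows "pp e k n = k"
proof -
  have "{b. b < k \<and> e b < n} = {..<k}" using assms by auto
  then show ?thesis unfolding pp_def by simp
qed

definition upd :: "(nat \<Rightarrow> nat \<Rightarrow> 'a) \<Rightarrow> nat \<Rightarrow> (nat \<Rightarrow> 'a) \<Rightarrow> nat \<Rightarrow> nat \<Rightarrow> 'a" where
  "upd G t g = (\<lambda>i j. if j = t then g i else G i j)"

lemma form_repr:
  fixes G :: "nat \<Rightarrow> nat \<Rightarrow> 'a::field"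
  assumes sm: "strict_mono_on {..<k} e" and rb: "bij_betw r {..<k} {..<k}"
    and P: "P < k" "e P = t" "\<And>b. b < P \<Longrightarrow> e b < t"
  shows "\<exists>c. (\<forall>g. det (subm (upd G t g) r e (Suc P)) = (\<Sum>i<k. c i * g i))
            \<and> c (r P) = det (subm G r e P)"
proof -
  define w where "w = (\<lambda>a. cofactor (subm G r e (Suc P)) a P)"
  define c where "c = (\<lambda>i. if i \<in> r ` {..<Suc P} then w (inv_into {..<Suc P} r i) else 0)"
  have injk: "inj_on r {..<k}" using rb unfolding bij_betw_def by blast
  have sub: "{..<Suc P} \<subseteq> {..<k}" using P(1) by auto
  have inj: "inj_on r {..<Suc P}" using inj_on_subset[OF injk sub] .
  have img: "r ` {..<Suc P} \<subseteq> {..<k}" using image_mono[OF sub, of r] rb unfolding bij_betw_def by simp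
  have "det (subm (upd G t g) r e (Suc P)) = (\<Sum>i<k. c i * g i)" for g
  proof -
    have "det (subm (upd G t g) r e (Suc P)) =
        (\<Sum>a<Suc P. upd G t g (r a) (e P) * cofactor (subm (upd G t g) r e (Suc P)) a P)"
      by (rule subm_laplace)
    also have "\<dots> = (\<Sum>a<Suc P. g (r a) * w a)"
    proof (rule sum.cong)
      fix a assume "a \<in> {..<Suc P}"
      have "cofactor (subm (upd G t g) r e (Suc P)) a P = cofactor (subm G r e (Suc P)) a P"
      proof (rule subm_cofactor_cong)
        fix a' b assume "a' < Suc P" "b < P"
        have "e b < t" using P(3)[OF \<open>b < P\<close>] .
        then have "e b \<noteq> t" by simp
        then show "upd G t g (r a') (e b) = G (r a') (e b)" unfolding upd_def by simp
      qed
      then show "upd G t g (r a) (e P) * cofactor (subm (upd G t g) r e (Suc P)) a P = g (r a) * w a"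
        unfolding w_def upd_def using P(2) by simp
    qed simp
    also have "\<dots> = (\<Sum>a<Suc P. c (r a) * g (r a))"
    proof (rule sum.cong)
      fix a assume a: "a \<in> {..<Suc P}"
      then have "inv_into {..<Suc P} r (r a) = a" using inv_into_f_f[OF inj a] by simp
      then show "g (r a) * w a = c (r a) * g (r a)" unfolding c_def using a by simp
    qed simp
    also have "\<dots> = (\<Sum>i\<in>r ` {..<Suc P}. c i * g i)"
      by (rule sum.reindex[OF inj, symmetric, unfolded comp_def])
    also have "\<dots> = (\<Sum>i<k. c i * g i)"
      by (rule sum.mono_neutral_left) (use img in \<open>auto simp: c_def\<close>)
    finally show ?thesis .
  qed
  moreover have "c (r P) = det (subm G r e P)"
  proof -
    have "P \<in> {..<Suc P}" by simp
    then have "inv_into {..<Suc P} r (r P) = P" using inv_into_f_f[OF inj] by blast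
    then have "c (r P) = w P" unfolding c_def by simp
    also have "\<dots> = det (subm G r e P)" unfolding w_def by (rule subm_cofactor_last)
    finally show ?thesis .
  qed
  ultimately show ?thesis by blast
qed


lemma construct:
  fixes allowed :: "nat \<Rightarrow> nat \<Rightarrow> bool" and JJ :: "nat set set" and rho e :: "nat set \<Rightarrow> nat \<Rightarrow> nat"
  assumes fin: "finite JJ"
    and e_mono: "\<And>J. J \<in> JJ \<Longrightarrow> strict_mono_on {..<k} (e J)"
    and e_img: "\<And>J. J \<in> JJ \<Longrightarrow> e J ` {..<k} = J"
    and J_n: "\<And>J. J \<in> JJ \<Longrightarrow> J \<subseteq> {..<n}"
    and rho_bij: "\<And>J. J \<in> JJ \<Longrightarrow> bij_betw (rho J) {..<k} {..<k}"
    and rho_ok: "\<And>J a. J \<in> JJ \<Longrightarrow> a < k \<Longrightarrow> allowed (rho J a) (e J a)"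
    and cnt: "\<And>t. t < n \<Longrightarrow> card {J\<in>JJ. t \<in> J} < card (UNIV :: 'a::{finite,field} set)"
  shows "\<exists>G::nat\<Rightarrow>nat\<Rightarrow>'a. (\<forall>i j. \<not> allowed i j \<longrightarrow> G i j = 0)
            \<and> (\<forall>J\<in>JJ. det (subm G (rho J) (e J) k) \<noteq> 0)"
proof -
  have main: "t \<le> n \<Longrightarrow> \<exists>G::nat\<Rightarrow>nat\<Rightarrow>'a. (\<forall>i j. \<not> allowed i j \<longrightarrow> G i j = 0)
            \<and> (\<forall>J\<in>JJ. det (subm G (rho J) (e J) (pp (e J) k t)) \<noteq> 0)" for t
  proof (induction t)
    case 0
    have z: "det (subm (\<lambda>_ _. 0::'a) (rho J) (e J) 0) \<noteq> 0" for J
      unfolding subm_def by (simp add: det_def)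
    show ?case unfolding pp_0
    proof (intro exI[of _ "\<lambda>_ _. 0::'a"] conjI)
      show "\<forall>i j. \<not> allowed i j \<longrightarrow> (\<lambda>_ _. 0::'a) i j = 0" by simp
      show "\<forall>J\<in>JJ. det (subm (\<lambda>_ _. 0::'a) (rho J) (e J) 0) \<noteq> 0" using z by blast
    qed
  next
    case (Suc t)
    then have tn: "t < n" by simp
    from Suc.IH obtain G :: "nat\<Rightarrow>nat\<Rightarrow>'a" where
      G0: "\<forall>i j. \<not> allowed i j \<longrightarrow> G i j = 0"
      and G1: "\<forall>J\<in>JJ. det (subm G (rho J) (e J) (pp (e J) k t)) \<noteq> 0"
      using Suc.prems by auto
    define JT where "JT = {J\<in>JJ. t \<in> J}"
    define form where "form = (\<lambda>J (g::nat\<Rightarrow>'a). det (subm (upd G t g) (rho J) (e J) (Suc (pp (e J) k t))))"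
    define F where "F = form ` JT"
    have finJT: "finite JT" unfolding JT_def using fin by simp
    have finF: "finite F" unfolding F_def using finJT by simp
    have cardF: "card F < card (UNIV :: 'a set)"
    proof -
      have "card F \<le> card JT" unfolding F_def by (rule card_image_le[OF finJT])
      moreover have "card JT < card (UNIV :: 'a set)" unfolding JT_def by (rule cnt[OF tn])
      ultimately show ?thesis by linarith
    qed
    define I where "I = {i. allowed i t}"
    have reprF: "\<forall>f\<in>F. \<exists>c. (\<forall>g. f g = (\<Sum>i<k. c i * g i)) \<and> (\<exists>i\<in>I. i < k \<and> c i \<noteq> 0)"
    proof
      fix f assume "f \<in> F"
      then obtain J where J: "J \<in> JJ" "t \<in> J" "f = form J" unfolding F_def JT_def by blast
      define P where "P = pp (e J) k t"
      have tJ: "t \<in> e J ` {..<k}" using e_img[OF J(1)] J(2) by simp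
      note ppi = pp_in[OF e_mono[OF J(1)] tJ]
      have P: "P < k" "e J P = t" using ppi unfolding P_def by simp_all
      have Pb: "e J b < t" if "b < P" for b
        using pp_iff[OF e_mono[OF J(1)], of b t] that unfolding P_def by simp
      obtain c where c: "\<forall>g. det (subm (upd G t g) (rho J) (e J) (Suc P)) = (\<Sum>i<k. c i * g i)"
        "c (rho J P) = det (subm G (rho J) (e J) P)"
        using form_repr[OF e_mono[OF J(1)] rho_bij[OF J(1)] P Pb] by blast
      have "\<forall>g. f g = (\<Sum>i<k. c i * g i)" using c(1) unfolding J(3) form_def P_def by simp
      moreover have "rho J P \<in> I" using rho_ok[OF J(1) P(1)] P(2) unfolding I_def by simp
      moreover have "rho J P < k" using rho_bij[OF J(1)] P(1) unfolding bij_betw_def by blast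
      moreover have "c (rho J P) \<noteq> 0" using c(2) G1 J(1) unfolding P_def by simp
      ultimately show "\<exists>c. (\<forall>g. f g = (\<Sum>i<k. c i * g i)) \<and> (\<exists>i\<in>I. i < k \<and> c i \<noteq> 0)" by blast
    qed
    obtain g where g: "\<forall>i. i \<notin> I \<longrightarrow> g i = 0" "\<forall>f\<in>F. f g \<noteq> 0"
      using avoid[OF finF cardF reprF] by blast
    define G' where "G' = upd G t g"
    have G'0: "\<forall>i j. \<not> allowed i j \<longrightarrow> G' i j = 0"
    proof (intro allI impI)
      fix i j assume na: "\<not> allowed i j"
      show "G' i j = 0"
      proof (cases "j = t")
        case True then show ?thesis using g(1) na unfolding G'_def upd_def I_def by simp
      next
        case False then show ?thesis using G0 na unfolding G'_def upd_def by simp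
      qed
    qed
    have G'1: "det (subm G' (rho J) (e J) (pp (e J) k (Suc t))) \<noteq> 0" if J: "J \<in> JJ" for J
    proof (cases "t \<in> J")
      case True
      have tJ: "t \<in> e J ` {..<k}" using e_img[OF J] True by simp
      have "pp (e J) k (Suc t) = Suc (pp (e J) k t)" using pp_in(3)[OF e_mono[OF J] tJ] .
      moreover have "form J \<in> F" unfolding F_def JT_def using J True by blast
      moreover have "form J g \<noteq> 0" using g(2) \<open>form J \<in> F\<close> by blast
      ultimately show ?thesis unfolding form_def G'_def by simp
    next
      case False
      have tJ: "t \<notin> e J ` {..<k}" using e_img[OF J] False by simp
      have eq: "pp (e J) k (Suc t) = pp (e J) k t" using pp_notin[OF e_mono[OF J] tJ] .
      have "subm G' (rho J) (e J) (pp (e J) k t) = subm G (rho J) (e J) (pp (e J) k t)"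
      proof -
        have "G' (rho J a) (e J b) = G (rho J a) (e J b)" if "b < pp (e J) k t" for a b
        proof -
          have "e J b < t" using pp_iff[OF e_mono[OF J], of b t] that by simp
          then show ?thesis unfolding G'_def upd_def by simp
        qed
        then show ?thesis unfolding subm_def by (intro eq_matI) simp_all
      qed
      then show ?thesis using G1 J eq by simp
    qed
    show ?case using G'0 G'1 by blast
  qed
  have "\<exists>G::nat\<Rightarrow>nat\<Rightarrow>'a. (\<forall>i j. \<not> allowed i j \<longrightarrow> G i j = 0)
            \<and> (\<forall>J\<in>JJ. det (subm G (rho J) (e J) (pp (e J) k n)) \<noteq> 0)" by (rule main) simp
  moreover have "pp (e J) k n = k" if "J \<in> JJ" for J
    using pp_n[of "e J" k n] e_img[OF that] J_n[OF that] by simp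
  ultimately show ?thesis by simp
qed


lemma le_div_iff_nat: "0 < (q::nat) \<Longrightarrow> m \<le> x div q \<longleftrightarrow> m * q \<le> x"
  using div_less_iff_less_mult[of q x m] by linarith

lemma div_le_iff_nat: "0 < (q::nat) \<Longrightarrow> x div q \<le> m \<longleftrightarrow> x < Suc m * q"
  using div_less_iff_less_mult[of q x "Suc m"] by linarith

definition sg :: "nat \<Rightarrow> nat \<Rightarrow> nat \<Rightarrow> nat" where
  "sg n k i = i * n div k"

definition zero :: "nat \<Rightarrow> nat \<Rightarrow> nat \<Rightarrow> nat \<Rightarrow> bool" where
  "zero n k i j \<longleftrightarrow> (sg n k i \<le> j \<and> j < sg n k i + (k - 1)) \<or> (sg n k i \<le> j + n \<and> j + n < sg n k i + (k - 1))"

lemma sg_less: assumes "i < k" "k \<le> n" shows "sg n k i < n"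
proof -
  have "0 < n" using assms by simp
  then have "i * n < k * n" using assms(1) by simp
  then have "i * n < n * k" by (simp add: mult.commute)
  then show ?thesis unfolding sg_def using div_less_iff_less_mult[of k "i*n" n] assms by simp
qed

lemma sg_add_k: assumes "0 < k" shows "sg n k (i + k) = sg n k i + n"
proof -
  have "(i + k) * n = i * n + n * k" by (simp add: algebra_simps)
  then show ?thesis unfolding sg_def using assms by simp
qed

lemma sg_step: assumes "k \<le> n" "0 < k" shows "sg n k i + 1 \<le> sg n k (Suc i)"
proof -
  have "(i * n + k) div k = i * n div k + 1" using assms(2) by simp
  moreover have "(i * n + k) div k \<le> (i * n + n) div k" using assms(1) by (simp add: div_le_mono)
  ultimately show ?thesis unfolding sg_def by (simp add: algebra_simps)
qed

lemma sg_mono_gap: assumes "k \<le> n" "0 < k" "i \<le> i'" shows "sg n k i + (i' - i) \<le> sg n k i'"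
  using assms(3)
proof (induction i' rule: dec_induct)
  case base then show ?case by simp
next
  case (step m)
  then show ?case using sg_step[OF assms(1,2), of m] by (simp add: Suc_diff_le)
qed

lemma sg_upper_gap:
  assumes "k \<le> n" "i' < i" "i < k"
  shows "sg n k i + k + i' \<le> sg n k i' + n + i"
proof -
  define d where "d = i - i'"
  have d: "i = i' + d" "0 < d" "d < k" using assms unfolding d_def by auto
  have kpos: "0 < k" using assms by simp
  have "i * n = i' * n + d * n" using d(1) by (simp add: algebra_simps)
  moreover have "i' * n div k * k + i' * n mod k = i' * n" by (rule div_mult_mod_eq)
  moreover have "i' * n mod k < k" using kpos by simp
  ultimately have "i * n + 1 \<le> d * n + k + i' * n div k * k" by linarith
  then have "i * n \<le> (d * n + (k - 1)) + k * (i' * n div k)" using kpos by (simp add: mult.commute)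
  then have "i * n div k \<le> ((d * n + (k - 1)) + k * (i' * n div k)) div k" by (rule div_le_mono)
  also have "\<dots> = i' * n div k + (d * n + (k - 1)) div k"
    by (rule div_mult_self2) (use kpos in simp)
  finally have "sg n k i \<le> sg n k i' + (d * n + (k - 1)) div k" unfolding sg_def .
  moreover have "(d * n + (k - 1)) div k \<le> n - k + d"
  proof -
    define m where "m = n - k"
    have nm: "n = m + k" using assms(1) unfolding m_def by simp
    have dm: "d * m \<le> k * m" using d(3) by (simp add: mult_le_mono1 less_imp_le)
    have "d * (m + k) + (k - 1) < Suc (m + d) * k"
    proof -
      have "d * (m + k) = d * m + d * k" by (simp add: algebra_simps)
      moreover have "Suc (m + d) * k = m * k + d * k + k" by (simp add: algebra_simps)
      moreover have "k - 1 < k" using kpos by simp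
      moreover have "d * m \<le> m * k" using dm by (simp add: mult.commute)
      ultimately show ?thesis by linarith
    qed
    then have key: "d * n + (k - 1) < Suc (n - k + d) * k" unfolding nm by simp
    then show ?thesis using div_le_iff_nat[OF kpos] by blast
  qed
  ultimately have "sg n k i \<le> sg n k i' + (n - k + d)" by linarith
  then show ?thesis using d assms(1) by linarith
qed

lemma row_zero_count:
  assumes "i < k" "k \<le> n"
  shows "card {j. j < n \<and> zero n k i j} = k - 1"
proof -
  define s where "s = sg n k i"
  have sn: "s < n" unfolding s_def using sg_less[OF assms(1,2)] .
  have eq: "{j. j < n \<and> zero n k i j} = {s ..< min n (s + (k - 1))} \<union> {..< s + (k - 1) - n}"
    unfolding zero_def s_def[symmetric] using sn assms by auto
  have le: "s + (k - 1) - n \<le> s" using assms by arith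
  have disj: "{s ..< min n (s + (k - 1))} \<inter> {..< s + (k - 1) - n} = {}"
  proof (rule equals0I)
    fix x assume "x \<in> {s ..< min n (s + (k - 1))} \<inter> {..< s + (k - 1) - n}"
    then have "s \<le> x" "x < s + (k - 1) - n" by auto
    then show False using le by linarith
  qed
  have "card {j. j < n \<and> zero n k i j} = card {s ..< min n (s + (k - 1))} + card {..< s + (k - 1) - n}"
    unfolding eq using card_Un_disjoint[OF _ _ disj] by simp
  also have "\<dots> = k - 1" using sn by (cases "s + (k - 1) \<le> n") auto
  finally show ?thesis .
qed

lemma count_mult:
  assumes "0 < (n::nat)"
  shows "c div n \<le> card {u. L \<le> u * n \<and> u * n < L + c} \<and> card {u. L \<le> u * n \<and> u * n < L + c} \<le> c div n + 1"
proof -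
  define a where "a = L + n - 1"
  have set_eq: "{u. L \<le> u * n \<and> u * n < L + c} = {a div n ..< (a + c) div n}"
  proof -
    have 1: "L \<le> u * n \<longleftrightarrow> a div n \<le> u" for u
      using div_less_iff_less_mult[OF assms, of a "Suc u"] assms unfolding a_def by auto
    have 2: "u * n < L + c \<longleftrightarrow> u < (a + c) div n" for u
      using le_div_iff_nat[OF assms, of "Suc u" "a + c"] assms unfolding a_def by auto
    show ?thesis using 1 2 by auto
  qed
  have "(a + c) div n = a div n + c div n + (a mod n + c mod n) div n" by (rule div_add1_eq)
  moreover have "(a mod n + c mod n) div n \<le> 1"
  proof -
    have "a mod n < n" "c mod n < n" using assms by simp_all
    then have "a mod n + c mod n < 2 * n" by linarith
    then show ?thesis using div_less_iff_less_mult[OF assms, of "a mod n + c mod n" 2] by simp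
  qed
  ultimately show ?thesis unfolding set_eq by simp
qed

lemma col_zero_count:
  assumes "j < n" "1 \<le> k" "k \<le> n"
  shows "card {i. i < k \<and> zero n k i j} = card {u. (j + n + 2 - k) * k \<le> u * n \<and> u * n < (j + n + 2 - k) * k + (k - 1) * k}"
proof -
  have kpos: "0 < k" using assms by simp
  define U where "U = {u. j + n + 2 \<le> sg n k u + k \<and> sg n k u \<le> j + n}"
  define phi where "phi = (\<lambda>i. if sg n k i \<le> j then i + k else i)"
  have inj: "inj_on phi {i. i < k \<and> zero n k i j}"
    unfolding inj_on_def phi_def by auto
  have img: "phi ` {i. i < k \<and> zero n k i j} = U"
  proof
    show "phi ` {i. i < k \<and> zero n k i j} \<subseteq> U"
    proof
      fix u assume "u \<in> phi ` {i. i < k \<and> zero n k i j}"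
      then obtain i where i: "i < k" "zero n k i j" "u = phi i" by blast
      show "u \<in> U"
      proof (cases "sg n k i \<le> j")
        case True
        then have "u = i + k" using i(3) unfolding phi_def by simp
        moreover have "j < sg n k i + (k - 1)" using i(2) True assms unfolding zero_def by auto
        ultimately show ?thesis unfolding U_def using sg_add_k[OF kpos, of n i] True by auto
      next
        case False
        then have "u = i" using i(3) unfolding phi_def by simp
        moreover have "sg n k i \<le> j + n \<and> j + n < sg n k i + (k - 1)" using i(2) False unfolding zero_def by auto
        ultimately show ?thesis unfolding U_def by auto
      qed
    qed
    show "U \<subseteq> phi ` {i. i < k \<and> zero n k i j}"
    proof
      fix u assume u: "u \<in> U"
      then have u1: "j + n + 2 \<le> sg n k u + k" "sg n k u \<le> j + n" unfolding U_def by auto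
      have "u < 2 * k"
      proof (rule ccontr)
        assume "\<not> u < 2 * k"
        then have "2 * k * n \<le> u * n" by simp
        then have "2 * n \<le> sg n k u" unfolding sg_def using le_div_iff_nat[OF kpos] by (simp add: mult.commute)
        then show False using u1(2) assms(1) by linarith
      qed
      show "u \<in> phi ` {i. i < k \<and> zero n k i j}"
      proof (cases "k \<le> u")
        case True
        define i where "i = u - k"
        have ui: "u = i + k" unfolding i_def using True by simp
        have si: "sg n k u = sg n k i + n" unfolding ui by (rule sg_add_k[OF kpos])
        have "i < k" using \<open>u < 2 * k\<close> unfolding i_def by simp
        moreover have "sg n k i \<le> j" using u1(2) si by simp
        moreover have "j < sg n k i + (k - 1)" using u1(1) si assms by simp
        ultimately have "i \<in> {i. i < k \<and> zero n k i j}" "u = phi i"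
          unfolding zero_def phi_def ui by auto
        then show ?thesis by (intro image_eqI[of u phi i])
      next
        case False
        have "\<not> sg n k u \<le> j" using u1(1) assms by linarith
        moreover have "j + n < sg n k u + (k - 1)" using u1(1) assms by linarith
        ultimately have "u \<in> {i. i < k \<and> zero n k i j}" "u = phi u"
          using u1(2) False unfolding zero_def phi_def by auto
        then show ?thesis by (intro image_eqI[of u phi u])
      qed
    qed
  qed
  have "card {i. i < k \<and> zero n k i j} = card U"
    using card_image[OF inj] img by simp
  also have "U = {u. (j + n + 2 - k) * k \<le> u * n \<and> u * n < (j + n + 2 - k) * k + (k - 1) * k}"
  proof -
    have "j + n + 2 \<le> sg n k u + k \<longleftrightarrow> (j + n + 2 - k) * k \<le> u * n" for u
      using le_div_iff_nat[OF kpos, of "j + n + 2 - k" "u * n"] unfolding sg_def by linarith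
    moreover have "sg n k u \<le> j + n \<longleftrightarrow> u * n < (j + n + 2 - k) * k + (k - 1) * k" for u
    proof -
      have h: "j + n + 2 - k + (k - 1) = Suc (j + n)" using assms by arith
      have "(j + n + 2 - k) * k + (k - 1) * k = Suc (j + n) * k"
        by (simp only: add_mult_distrib[symmetric] h)
      then show ?thesis using div_le_iff_nat[OF kpos, of "u * n" "j + n"] unfolding sg_def by simp
    qed
    ultimately show ?thesis unfolding U_def by blast
  qed
  finally show ?thesis .
qed


definition jt :: "(nat \<Rightarrow> nat) \<Rightarrow> nat \<Rightarrow> nat \<Rightarrow> nat \<Rightarrow> nat" where
  "jt e n k u = e (u mod k) + n * (u div k)"

definition NN :: "(nat \<Rightarrow> nat) \<Rightarrow> nat \<Rightarrow> nat \<Rightarrow> nat \<Rightarrow> nat" where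
  "NN e n k x = card {u. jt e n k u < x}"

locale enum =
  fixes e :: "nat \<Rightarrow> nat" and n k :: nat
  assumes kpos: "0 < k" and kn: "k \<le> n"
    and e_mono: "strict_mono_on {..<k} e" and e_lt: "\<And>a. a < k \<Longrightarrow> e a < n"
begin

lemma jt_Suc: "jt e n k u < jt e n k (Suc u)"
proof (cases "Suc (u mod k) = k")
  case True
  then have m: "Suc u mod k = 0" "Suc u div k = Suc (u div k)"
    using mod_Suc[of u k] div_Suc[of u k] by simp_all
  have "e (u mod k) < n" using e_lt kpos by simp
  moreover have "0 < k" using kpos .
  ultimately show ?thesis unfolding jt_def m by simp
next
  case False
  then have m: "Suc u mod k = Suc (u mod k)" "Suc u div k = u div k"
    using mod_Suc[of u k] div_Suc[of u k] by simp_all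
  have "Suc (u mod k) < k" using False kpos by (metis Suc_lessI mod_less_divisor)
  then have "e (u mod k) < e (Suc (u mod k))"
    using strict_mono_onD[OF e_mono, of "u mod k" "Suc (u mod k)"] by simp
  then show ?thesis unfolding jt_def m by simp
qed

lemma jt_less: "u < v \<Longrightarrow> jt e n k u < jt e n k v"
  using lift_Suc_mono_less[of "jt e n k", OF jt_Suc] by blast

lemma jt_ge: "u \<le> jt e n k u"
proof (induction u)
  case 0 then show ?case by simp
next
  case (Suc u) then show ?case using jt_Suc[of u] by simp
qed

lemma jt_add: "jt e n k (u + k) = jt e n k u + n"
  unfolding jt_def using kpos by simp

lemma jt_small: "u < k \<Longrightarrow> jt e n k u = e u"
  unfolding jt_def by simp

lemma NN_iff: "u < NN e n k x \<longleftrightarrow> jt e n k u < x"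
proof -
  define S where "S = {u. jt e n k u < x}"
  have fin: "finite S"
  proof (rule finite_subset)
    show "S \<subseteq> {..<x}" unfolding S_def using jt_ge le_less_trans by auto
  qed simp
  have dc: "y \<in> S" if "z \<in> S" "y < z" for y z
    using jt_less[OF that(2)] that(1) unfolding S_def by simp
  have "S = {..<card S}" by (rule downclosed_eq[OF fin dc])
  then have "u \<in> S \<longleftrightarrow> u < card S" by blast
  then show ?thesis unfolding NN_def S_def by simp
qed

lemma NN_add: "NN e n k (x + n) = NN e n k x + k"
proof (rule nat_eq_by_less)
  fix b
  show "b < NN e n k (x + n) \<longleftrightarrow> b < NN e n k x + k"
  proof (cases "b < k")
    case True
    have "e b < n" using e_lt[OF True] .
    then have "jt e n k b < x + n" using jt_small[OF True] by simp
    then show ?thesis using True NN_iff by simp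
  next
    case False
    define b' where "b' = b - k"
    have b: "b = b' + k" using False unfolding b'_def by simp
    have "b < NN e n k (x + n) \<longleftrightarrow> jt e n k b' + n < x + n" unfolding NN_iff b jt_add ..
    also have "\<dots> \<longleftrightarrow> b' < NN e n k x" unfolding NN_iff by simp
    also have "\<dots> \<longleftrightarrow> b < NN e n k x + k" unfolding b by simp
    finally show ?thesis .
  qed
qed

lemma NN_mono: assumes "x \<le> y" shows "NN e n k x \<le> NN e n k y"
proof (rule ccontr)
  assume "\<not> NN e n k x \<le> NN e n k y"
  then have "NN e n k y < NN e n k x" by simp
  then have "jt e n k (NN e n k y) < x" using NN_iff by blast
  then have "jt e n k (NN e n k y) < y" using assms by simp
  then have "NN e n k y < NN e n k y" using NN_iff by blast
  then show False by simp
qed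

lemma NN_diff: assumes "x \<le> y" shows "NN e n k y + x \<le> NN e n k x + y"
proof -
  have "card {NN e n k x ..< NN e n k y} \<le> card {x ..< y}"
  proof (rule card_inj_on_le)
    show "inj_on (jt e n k) {NN e n k x ..< NN e n k y}"
      unfolding inj_on_def by (metis jt_less less_irrefl nat_neq_iff)
    show "jt e n k ` {NN e n k x ..< NN e n k y} \<subseteq> {x ..< y}"
    proof
      fix v assume "v \<in> jt e n k ` {NN e n k x ..< NN e n k y}"
      then obtain u where u: "NN e n k x \<le> u" "u < NN e n k y" "v = jt e n k u" by auto
      have "\<not> jt e n k u < x" using u(1) NN_iff[of u x] by simp
      moreover have "jt e n k u < y" using u(2) NN_iff by simp
      ultimately show "v \<in> {x ..< y}" using u(3) by simp
    qed
  qed simp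
  then have "NN e n k y - NN e n k x \<le> y - x" by simp
  moreover have "NN e n k x \<le> NN e n k y" using NN_mono[OF assms] .
  ultimately show ?thesis using assms by linarith
qed

lemma feas:
  assumes i: "i < k" and i': "i' < k"
  shows "NN e n k (sg n k i + (k - 1)) + i' + 1 \<le> NN e n k (sg n k i') + k + i"
proof -
  define si where "si = sg n k i"
  define si' where "si' = sg n k i'"
  define Q where "Q = NN e n k (si + (k - 1))"
  define P where "P = NN e n k si'"
  have k1: "k - 1 + 1 = k" using kpos by simp
  have sin: "si < n" "si' < n" unfolding si_def si'_def using sg_less kn i i' by auto
  have "Q + i' + 1 \<le> P + k + i"
  proof (cases "i' < i")
    case True
    show ?thesis
    proof (cases "si + (k - 1) \<le> si' + n")
      case True
      have "Q \<le> NN e n k (si' + n)" unfolding Q_def by (rule NN_mono[OF True])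
      then have "Q \<le> P + k" unfolding P_def NN_add .
      then show ?thesis using \<open>i' < i\<close> by linarith
    next
      case False
      have "Q + (si' + n) \<le> NN e n k (si' + n) + (si + (k - 1))"
        unfolding Q_def by (rule NN_diff) (use False in linarith)
      then have "Q + (si' + n) \<le> P + k + (si + (k - 1))" unfolding P_def NN_add .
      moreover have "si + k + i' \<le> si' + n + i"
        unfolding si_def si'_def by (rule sg_upper_gap[OF kn \<open>i' < i\<close> i])
      ultimately show ?thesis using k1 by linarith
    qed
  next
    case False
    show ?thesis
    proof (cases "i = i'")
      case True
      have "Q + si \<le> NN e n k si + (si + (k - 1))" unfolding Q_def by (rule NN_diff) simp
      then show ?thesis unfolding P_def si_def si'_def using True k1 by simp
    next
      case False
      then have ii: "i < i'" using \<open>\<not> i' < i\<close> by simp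
      have gap: "si + (i' - i) \<le> si'" unfolding si_def si'_def
        by (rule sg_mono_gap[OF kn kpos]) (use ii in simp)
      show ?thesis
      proof (cases "si + (k - 1) \<le> si'")
        case True
        have "Q \<le> P" unfolding Q_def P_def by (rule NN_mono[OF True])
        then show ?thesis using i' by linarith
      next
        case False
        have "Q + si' \<le> P + (si + (k - 1))"
          unfolding Q_def P_def by (rule NN_diff) (use False in linarith)
        then show ?thesis using gap ii k1 by linarith
      qed
    qed
  qed
  then show ?thesis unfolding Q_def P_def si_def si'_def .
qed

lemma matching:
  "\<exists>\<rho>. bij_betw \<rho> {..<k} {..<k} \<and> (\<forall>a<k. \<not> zero n k (\<rho> a) (e a))"
proof -
  define P where "P = (\<lambda>i. NN e n k (sg n k i))"
  define Q where "Q = (\<lambda>i. NN e n k (sg n k i + (k - 1)))"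
  define s where "s = Max ((\<lambda>i. Q i + k - i) ` {..<k})"
  have fin: "finite ((\<lambda>i. Q i + k - i) ` {..<k})" by simp
  have ne: "(\<lambda>i. Q i + k - i) ` {..<k} \<noteq> {}" using kpos by auto
  have sge: "Q i + k \<le> s + i" if "i < k" for i
  proof -
    have "Q i + k - i \<le> s" unfolding s_def by (rule Max_ge[OF fin]) (use that in blast)
    then show ?thesis using that by linarith
  qed
  obtain i0 where i0: "i0 < k" "s = Q i0 + k - i0"
    using Max_in[OF fin ne] unfolding s_def by auto
  have sle: "s + i' + 1 \<le> P i' + 2 * k" if "i' < k" for i'
  proof -
    have "Q i0 + i' + 1 \<le> P i' + k + i0" unfolding Q_def P_def by (rule feas[OF i0(1) that])
    then show ?thesis using i0 by linarith
  qed
  have sk: "k \<le> s" using sge[OF kpos] by simp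
  define c where "c = s - k"
  define col where "col = (\<lambda>i. (i + c) mod k)"
  have nz: "\<not> zero n k i (e (col i))" if i: "i < k" for i
  proof -
    define u where "u = i + c"
    define sgi where "sgi = sg n k i"
    have sgi: "sgi < n" unfolding sgi_def using sg_less[OF i kn] .
    have "Q i \<le> u" using sge[OF i] sk unfolding u_def c_def by linarith
    then have "\<not> u < NN e n k (sgi + (k - 1))" unfolding Q_def sgi_def by simp
    then have lo: "sgi + (k - 1) \<le> jt e n k u" using NN_iff by (simp add: not_less)
    have "u < P i + k" using sle[OF i] sk unfolding u_def c_def by linarith
    then have "u < NN e n k (sgi + n)" unfolding P_def NN_add sgi_def .
    then have hi: "jt e n k u < sgi + n" using NN_iff by simp
    define j where "j = e (col i)"
    define D where "D = u div k"
    have cl: "col i < k" unfolding col_def using kpos by simp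
    have jn: "j < n" unfolding j_def using e_lt[OF cl] .
    have jt: "jt e n k u = j + n * D" unfolding jt_def j_def D_def col_def u_def by simp
    have "n * D < n * 2" using hi sgi unfolding jt by linarith
    then have "D < 2" by simp
    then have "D = 0 \<or> D = 1" by arith
    then show ?thesis
    proof
      assume "D = 0"
      then have "sgi + (k - 1) \<le> j" using lo unfolding jt by simp
      then show ?thesis unfolding zero_def sgi_def[symmetric] j_def[symmetric] by linarith
    next
      assume "D = 1"
      then have "sgi + (k - 1) \<le> j + n" "j + n < sgi + n" using lo hi unfolding jt by simp_all
      then show ?thesis unfolding zero_def sgi_def[symmetric] j_def[symmetric] by linarith
    qed
  qed
  have inj: "inj_on col {..<k}"
  proof (rule inj_onI)
    fix x y assume x: "x \<in> {..<k}" and y: "y \<in> {..<k}" and eq: "col x = col y"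
    show "x = y"
    proof (rule ccontr)
      assume "x \<noteq> y"
      then consider "x < y" | "y < x" by arith
      then show False
      proof cases
        case 1
        have "(y + c) mod k = (x + c) mod k" using eq unfolding col_def by simp
        then have "k dvd (y + c) - (x + c)" using mod_eq_dvd_iff_nat[of "x + c" "y + c" k] 1 by simp
        then have "k dvd y - x" by simp
        moreover have "0 < y - x" "y - x < k" using 1 y by auto
        ultimately show False using nat_dvd_not_less by blast
      next
        case 2
        have "(x + c) mod k = (y + c) mod k" using eq unfolding col_def by simp
        then have "k dvd (x + c) - (y + c)" using mod_eq_dvd_iff_nat[of "y + c" "x + c" k] 2 by simp
        then have "k dvd x - y" by simp
        moreover have "0 < x - y" "x - y < k" using 2 x by auto
        ultimately show False using nat_dvd_not_less by blast
      qed
    qed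
  qed
  have sub: "col ` {..<k} \<subseteq> {..<k}" unfolding col_def using kpos by auto
  have img: "col ` {..<k} = {..<k}" by (rule endo_inj_surj[OF _ sub inj]) simp
  have bcol: "bij_betw col {..<k} {..<k}" unfolding bij_betw_def using inj img by blast
  define rho where "rho = inv_into {..<k} col"
  have brho: "bij_betw rho {..<k} {..<k}" unfolding rho_def by (rule bij_betw_inv_into[OF bcol])
  have "\<not> zero n k (rho a) (e a)" if a: "a < k" for a
  proof -
    have am: "a \<in> col ` {..<k}" using img a by simp
    have "rho a < k" using inv_into_into[OF am] unfolding rho_def by simp
    moreover have "col (rho a) = a" unfolding rho_def by (rule f_inv_into_f[OF am])
    ultimately show ?thesis using nz[of "rho a"] by simp
  qed
  then show ?thesis using brho by blast
qed

end


lemma card_containing: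
  assumes t: "t < n" and k: "1 \<le> k"
  shows "card {J \<in> {J. J \<subseteq> {..<n} \<and> card J = k}. t \<in> J} = (n - 1) choose (k - 1)"
proof -
  define BB where "BB = {B. B \<subseteq> {..<n} - {t} \<and> card B = k - 1}"
  have eq: "{J \<in> {J. J \<subseteq> {..<n} \<and> card J = k}. t \<in> J} = insert t ` BB"
  proof
    show "{J \<in> {J. J \<subseteq> {..<n} \<and> card J = k}. t \<in> J} \<subseteq> insert t ` BB"
    proof
      fix J assume "J \<in> {J \<in> {J. J \<subseteq> {..<n} \<and> card J = k}. t \<in> J}"
      then have J: "J \<subseteq> {..<n}" "card J = k" "t \<in> J" by auto
      have fJ: "finite J" using J(1) finite_subset by blast
      have "J - {t} \<in> BB" unfolding BB_def using J fJ by auto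
      moreover have "J = insert t (J - {t})" using J(3) by blast
      ultimately show "J \<in> insert t ` BB" by blast
    qed
    show "insert t ` BB \<subseteq> {J \<in> {J. J \<subseteq> {..<n} \<and> card J = k}. t \<in> J}"
    proof
      fix J assume "J \<in> insert t ` BB"
      then obtain B where B: "B \<subseteq> {..<n} - {t}" "card B = k - 1" "J = insert t B"
        unfolding BB_def by blast
      have fB: "finite B" using B(1) finite_subset by blast
      have "t \<notin> B" using B(1) by blast
      then have "card J = Suc (k - 1)" using B(2,3) fB by simp
      then have "card J = k" using k by simp
      moreover have "J \<subseteq> {..<n}" using B(1,3) t by blast
      ultimately show "J \<in> {J \<in> {J. J \<subseteq> {..<n} \<and> card J = k}. t \<in> J}" using B(3) by blast
    qed
  qed
  have inj: "inj_on (insert t) BB"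
  proof (rule inj_onI)
    fix B B' assume "B \<in> BB" "B' \<in> BB" "insert t B = insert t B'"
    moreover have "t \<notin> B" "t \<notin> B'" using \<open>B \<in> BB\<close> \<open>B' \<in> BB\<close> unfolding BB_def by blast+
    ultimately show "B = B'" by (metis insert_ident)
  qed
  have "card (insert t ` BB) = card BB" by (rule card_image[OF inj])
  also have "card BB = card ({..<n} - {t}) choose (k - 1)" unfolding BB_def by (rule n_subsets) simp
  also have "card ({..<n} - {t}) = n - 1" using t by simp
  finally show ?thesis unfolding eq .
qed

lemma sum_delta_row:
  fixes G :: "nat \<Rightarrow> nat \<Rightarrow> 'a::comm_ring_1"
  assumes "i < k"
  shows "(\<Sum>i'<k. (if i' = i then 1 else 0) * G i' j) = G i j"
proof -
  have e: "(\<lambda>i'. (if i' = i then 1 else 0) * G i' j) = (\<lambda>i'. if i' = i then G i' j else 0)"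
    by (rule ext) simp
  have "(\<Sum>i'<k. (if i' = i then G i' j else 0)) = G i j"
    using sum.delta[of "{..<k}" i "\<lambda>i'. G i' j"] assms by simp
  then show ?thesis unfolding e .
qed


theorem mainTheorem1:
  fixes n k :: nat
  assumes "1 \<le> k" "k \<le> n"
    and "card (UNIV :: 'a::{finite,field} set) > (n - 1) choose (k - 1)"
  shows "\<exists>G :: nat \<Rightarrow> nat \<Rightarrow> 'a.
           generates_MDS k n G
         \<and> (\<forall>i<k. row_weight n G i = n - k + 1)
         \<and> (\<forall>j1<n. \<forall>j2<n. \<bar>int (col_weight k G j1) - int (col_weight k G j2)\<bar> \<le> 1)"
proof -
  have kpos: "0 < k" using assms(1) by simp
  define JJ :: "nat set set" where "JJ = {J. J \<subseteq> {..<n} \<and> card J = k}"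
  define e :: "nat set \<Rightarrow> nat \<Rightarrow> nat" where "e = (\<lambda>J a. sorted_list_of_set J ! a)"
  define allowed :: "nat \<Rightarrow> nat \<Rightarrow> bool" where "allowed = (\<lambda>i j. \<not> zero n k i j)"
  have JJ_props: "strict_mono_on {..<k} (e J) \<and> e J ` {..<k} = J \<and> (\<forall>a<k. e J a < n)"
    if J: "J \<in> JJ" for J
  proof -
    have Jn: "J \<subseteq> {..<n}" and cJ: "card J = k" using J unfolding JJ_def by auto
    have fJ: "finite J" using Jn finite_subset by blast
    define xs where "xs = sorted_list_of_set J"
    have len: "length xs = k" unfolding xs_def using cJ by simp
    have sw: "sorted_wrt (<) xs" unfolding xs_def by simp
    have st: "set xs = J" unfolding xs_def using fJ by simp
    have sm: "strict_mono_on {..<k} (e J)"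
    proof (rule strict_mono_onI)
      fix r s assume "r \<in> {..<k}" "s \<in> {..<k}" "r < s"
      then show "e J r < e J s" using sorted_wrt_nth_less[OF sw, of r s] len unfolding e_def xs_def by simp
    qed
    have img: "e J ` {..<k} = J"
    proof -
      have "e J ` {..<k} = {xs ! a | a. a < length xs}" unfolding e_def xs_def[symmetric] len by auto
      also have "\<dots> = J" using st set_conv_nth[of xs] by simp
      finally show ?thesis .
    qed
    have "e J a < n" if "a < k" for a
    proof -
      have "e J a \<in> J" using img that by blast
      then show ?thesis using Jn by blast
    qed
    then show ?thesis using sm img by blast
  qed
  have rho_ex: "\<exists>\<rho>. bij_betw \<rho> {..<k} {..<k} \<and> (\<forall>a<k. \<not> zero n k (\<rho> a) (e J a))"
    if J: "J \<in> JJ" for J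
  proof -
    have P: "strict_mono_on {..<k} (e J)" "\<And>a. a < k \<Longrightarrow> e J a < n" using JJ_props[OF J] by blast+
    interpret enum "e J" n k by (rule enum.intro[OF kpos assms(2) P(1) P(2)])
    show ?thesis by (rule matching)
  qed
  define rho where "rho = (\<lambda>J. SOME \<rho>. bij_betw \<rho> {..<k} {..<k} \<and> (\<forall>a<k. \<not> zero n k (\<rho> a) (e J a)))"
  have rho: "bij_betw (rho J) {..<k} {..<k} \<and> (\<forall>a<k. \<not> zero n k (rho J a) (e J a))" if "J \<in> JJ" for J
    unfolding rho_def by (rule someI_ex[OF rho_ex[OF that]])
  have finJJ: "finite JJ"
  proof (rule finite_subset)
    show "JJ \<subseteq> Pow {..<n}" unfolding JJ_def by blast
  qed simp
  have cnt: "card {J\<in>JJ. t \<in> J} < card (UNIV :: 'a set)" if "t < n" for t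
    using card_containing[OF that assms(1)] assms(3) unfolding JJ_def by simp
  have "\<exists>G::nat\<Rightarrow>nat\<Rightarrow>'a. (\<forall>i j. \<not> allowed i j \<longrightarrow> G i j = 0)
            \<and> (\<forall>J\<in>JJ. det (subm G (rho J) (e J) k) \<noteq> 0)"
  proof (rule construct[of JJ k e n rho allowed])
    show "finite JJ" by (rule finJJ)
    show "\<And>J. J \<in> JJ \<Longrightarrow> strict_mono_on {..<k} (e J)" using JJ_props by blast
    show "\<And>J. J \<in> JJ \<Longrightarrow> e J ` {..<k} = J" using JJ_props by blast
    show "\<And>J. J \<in> JJ \<Longrightarrow> J \<subseteq> {..<n}" unfolding JJ_def by blast
    show "\<And>J. J \<in> JJ \<Longrightarrow> bij_betw (rho J) {..<k} {..<k}" using rho by blast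
    show "\<And>J a. J \<in> JJ \<Longrightarrow> a < k \<Longrightarrow> allowed (rho J a) (e J a)" unfolding allowed_def using rho by blast
    show "\<And>t. t < n \<Longrightarrow> card {J\<in>JJ. t \<in> J} < card (UNIV :: 'a set)" by (rule cnt)
  qed
  then obtain G :: "nat\<Rightarrow>nat\<Rightarrow>'a" where
    G0: "\<forall>i j. \<not> allowed i j \<longrightarrow> G i j = 0" and G1: "\<forall>J\<in>JJ. det (subm G (rho J) (e J) k) \<noteq> 0"
    by blast
  have ker: "m i = 0" if J: "J \<in> JJ" and m: "\<forall>j\<in>J. (\<Sum>i<k. m i * G i j) = 0" and i: "i < k" for J m i
  proof (rule subm_kernel[of G "rho J" "e J" k m i])
    show "det (subm G (rho J) (e J) k) \<noteq> 0" using G1 J by blast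
    show "bij_betw (rho J) {..<k} {..<k}" using rho[OF J] by blast
    show "\<And>b. b < k \<Longrightarrow> (\<Sum>i<k. m i * G i (e J b)) = 0"
    proof -
      fix b assume "b < k"
      then have "e J b \<in> J" using JJ_props[OF J] by blast
      then show "(\<Sum>i<k. m i * G i (e J b)) = 0" using m by blast
    qed
    show "i < k" by (rule i)
  qed
  have Gz: "G i j \<noteq> 0 \<longleftrightarrow> \<not> zero n k i j" if i: "i < k" and j: "j < n" for i j
  proof
    assume "G i j \<noteq> 0"
    then show "\<not> zero n k i j" using G0 unfolding allowed_def by blast
  next
    assume nz: "\<not> zero n k i j"
    show "G i j \<noteq> 0"
    proof
      assume G: "G i j = 0"
      define Z where "Z = {j'. j' < n \<and> zero n k i j'}"
      define J0 where "J0 = insert j Z"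
      have fZ: "finite Z" unfolding Z_def by simp
      have cZ: "card Z = k - 1" unfolding Z_def by (rule row_zero_count[OF i assms(2)])
      have jZ: "j \<notin> Z" unfolding Z_def using nz by blast
      have "card J0 = k" unfolding J0_def using fZ cZ jZ kpos by simp
      moreover have "J0 \<subseteq> {..<n}" unfolding J0_def Z_def using j by auto
      ultimately have J0: "J0 \<in> JJ" unfolding JJ_def by blast
      define m :: "nat \<Rightarrow> 'a" where "m = (\<lambda>i'. if i' = i then 1 else 0)"
      have "\<forall>j'\<in>J0. (\<Sum>i'<k. m i' * G i' j') = 0"
      proof
        fix j' assume j': "j' \<in> J0"
        have "(\<Sum>i'<k. m i' * G i' j') = G i j'" unfolding m_def by (rule sum_delta_row[OF i])
        also have "G i j' = 0"
        proof (cases "j' = j")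
          case True then show ?thesis using G by simp
        next
          case False
          then have "zero n k i j'" using j' unfolding J0_def Z_def by blast
          then show ?thesis using G0 unfolding allowed_def by blast
        qed
        finally show "(\<Sum>i'<k. m i' * G i' j') = 0" .
      qed
      then have "m i = 0" using ker[OF J0 _ i] by blast
      then show False unfolding m_def by simp
    qed
  qed
  have rw: "row_weight n G i = n - k + 1" if i: "i < k" for i
  proof -
    have "{j. j < n \<and> G i j \<noteq> 0} = {..<n} - {j. j < n \<and> zero n k i j}"
      using Gz[OF i] by auto
    then have "card {j. j < n \<and> G i j \<noteq> 0} = n - (k - 1)"
      using card_Diff_subset[of "{j. j < n \<and> zero n k i j}" "{..<n}"] row_zero_count[OF i assms(2)]
      by (simp add: subset_iff)
    then show ?thesis unfolding row_weight_def hamming_weight_def using assms(1,2) by simp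
  qed
  define cc where "cc = (k - 1) * k"
  have cw: "k - (cc div n + 1) \<le> col_weight k G j \<and> col_weight k G j \<le> k - cc div n
            \<and> cc div n \<le> k" if j: "j < n" for j
  proof -
    define Zc where "Zc = {i. i < k \<and> zero n k i j}"
    have "{i. i < k \<and> G i j \<noteq> 0} = {..<k} - Zc"
      unfolding Zc_def using Gz[OF _ j] by auto
    moreover have "Zc \<subseteq> {..<k}" unfolding Zc_def by auto
    ultimately have cwe: "col_weight k G j = k - card Zc"
      unfolding col_weight_def hamming_weight_def using card_Diff_subset[of Zc "{..<k}"]
      by (simp add: finite_subset)
    have npos: "0 < n" using assms by simp
    have "card Zc = card {u. (j + n + 2 - k) * k \<le> u * n \<and> u * n < (j + n + 2 - k) * k + cc}"
      unfolding Zc_def cc_def by (rule col_zero_count[OF j assms(1,2)])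
    then have b: "cc div n \<le> card Zc" "card Zc \<le> cc div n + 1"
      using count_mult[OF npos, of cc "(j + n + 2 - k) * k"] by simp_all
    have "card Zc \<le> k" using card_mono[OF _ \<open>Zc \<subseteq> {..<k}\<close>] by simp
    then show ?thesis using b cwe by linarith
  qed
  have bal: "\<bar>int (col_weight k G j1) - int (col_weight k G j2)\<bar> \<le> 1" if "j1 < n" "j2 < n" for j1 j2
    using cw[OF that(1)] cw[OF that(2)] by linarith
  have kJ: "{..<k} \<in> JJ" unfolding JJ_def using assms(2) by auto
  have ri: "rows_independent k n G"
    unfolding rows_independent_def
  proof (intro allI impI)
    fix m i assume h: "\<forall>j<n. (\<Sum>i<k. m i * G i j) = 0" and i: "i < k"
    have "\<forall>j\<in>{..<k}. (\<Sum>i<k. m i * G i j) = 0" using h assms(2) by auto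
    then show "m i = 0" by (rule ker[OF kJ _ i])
  qed
  define cwd :: "(nat \<Rightarrow> 'a) \<Rightarrow> nat \<Rightarrow> 'a" where "cwd = (\<lambda>m j. if j < n then (\<Sum>i<k. m i * G i j) else 0)"
  have rs: "row_space k n G = {cwd m | m. True}" unfolding row_space_def cwd_def by simp
  define DD where "DD = {hamming_dist n u v | u v. u \<in> row_space k n G \<and> v \<in> row_space k n G \<and> u \<noteq> v}"
  have hd_le: "hamming_dist n u v \<le> n" for u v :: "nat \<Rightarrow> 'a"
  proof -
    have "card {j. j < n \<and> u j \<noteq> v j} \<le> card {..<n}" by (rule card_mono) auto
    then show ?thesis unfolding hamming_dist_def by simp
  qed
  have finDD: "finite DD"
  proof (rule finite_subset)
    show "DD \<subseteq> {..n}" unfolding DD_def using hd_le by auto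
  qed simp
  have lower: "n - k + 1 \<le> y" if "y \<in> DD" for y
  proof (rule ccontr)
    assume "\<not> n - k + 1 \<le> y"
    then have yl: "y + k \<le> n" using assms by linarith
    from that obtain m1 m2 where y: "y = hamming_dist n (cwd m1) (cwd m2)" and ne: "cwd m1 \<noteq> cwd m2"
      unfolding DD_def rs by blast
    define E where "E = {j. j < n \<and> cwd m1 j = cwd m2 j}"
    define N where "N = {j. j < n \<and> cwd m1 j \<noteq> cwd m2 j}"
    have "E \<union> N = {..<n}" "E \<inter> N = {}" unfolding E_def N_def by auto
    then have "card E + card N = n" using card_Un_disjoint[of E N] by (simp add: E_def N_def)
    moreover have "card N = y" unfolding y hamming_dist_def N_def ..
    ultimately have "k \<le> card E" using yl by linarith
    then obtain J where J: "J \<subseteq> E" "card J = k" "finite J" by (rule obtain_subset_with_card_n)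
    have JJ: "J \<in> JJ" unfolding JJ_def using J E_def by auto
    have "\<forall>j\<in>J. (\<Sum>i<k. (m1 i - m2 i) * G i j) = 0"
    proof
      fix j assume "j \<in> J"
      then have j: "j < n" "cwd m1 j = cwd m2 j" using J(1) unfolding E_def by auto
      then have "(\<Sum>i<k. m1 i * G i j) = (\<Sum>i<k. m2 i * G i j)" unfolding cwd_def by simp
      then show "(\<Sum>i<k. (m1 i - m2 i) * G i j) = 0"
        by (simp add: left_diff_distrib sum_subtractf)
    qed
    note hz = this
    have mi: "m1 i = m2 i" if i: "i < k" for i
    proof -
      have "(\<lambda>i. m1 i - m2 i) i = 0" by (rule ker[OF JJ hz i])
      then show ?thesis by simp
    qed
    have "cwd m1 j = cwd m2 j" for j
    proof -
      have "(\<Sum>i<k. m1 i * G i j) = (\<Sum>i<k. m2 i * G i j)"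
        by (rule sum.cong) (simp_all add: mi)
      then show ?thesis unfolding cwd_def by simp
    qed
    then have "cwd m1 = cwd m2" by (rule ext)
    then show False using ne by simp
  qed
  have attained: "n - k + 1 \<in> DD"
  proof -
    define m0 :: "nat \<Rightarrow> 'a" where "m0 = (\<lambda>i'. if i' = 0 then 1 else 0)"
    have c0: "cwd m0 = (\<lambda>j. if j < n then G 0 j else 0)"
      unfolding cwd_def m0_def using sum_delta_row[OF kpos, of G] by (intro ext) simp
    have cz: "cwd (\<lambda>_. 0) = (\<lambda>_. 0)" unfolding cwd_def by (intro ext) simp
    have hd: "hamming_dist n (cwd m0) (cwd (\<lambda>_. 0)) = n - k + 1"
    proof -
      have "{j. j < n \<and> cwd m0 j \<noteq> cwd (\<lambda>_. 0) j} = {j. j < n \<and> G 0 j \<noteq> 0}"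
        unfolding c0 cz by auto
      then show ?thesis using rw[OF kpos] unfolding hamming_dist_def row_weight_def hamming_weight_def by simp
    qed
    have "cwd m0 \<noteq> cwd (\<lambda>_. 0)"
    proof
      assume "cwd m0 = cwd (\<lambda>_. 0)"
      then have "hamming_dist n (cwd m0) (cwd (\<lambda>_. 0)) = 0" unfolding hamming_dist_def by simp
      then show False using hd by simp
    qed
    moreover have "cwd m0 \<in> row_space k n G" "cwd (\<lambda>_. 0) \<in> row_space k n G" unfolding rs by blast+
    ultimately show ?thesis unfolding DD_def using hd by force
  qed
  have "min_distance n (row_space k n G) = n - k + 1"
    unfolding min_distance_def DD_def[symmetric] by (rule Min_eqI[OF finDD lower attained])
  then have "generates_MDS k n G" unfolding generates_MDS_def using ri by blast
  then show ?thesis using rw bal by blast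
qed


end
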